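(* Every element $h\in S\mathcal V_G$ can be written as $h=f_2^{-1}\,t\,f_1$ for some multicolored forests $f_1,f_2$ and some $G$-twist $t$ (of $\mathfrak C^S(k)$, where $k$ is the common rank of $f_1$ and $f_2$). Moreover, for such a decomposition, $h\in S\mathcal V$ if and only if $t$ is the identity.
   Context: Let $\mathfrak C=\{0,1\}^{\omega}$, $S$ a nonempty set, $G$ a subgroup of the symmetric group of $S$, and $\mathfrak C^S$ the space of functions $S\to\mathfrak C$. For $\psi\colon S\to\{0,1\}^*$ with $\psi(s)=\varnothing$ for all but finitely many $s$, the dyadic brick $B(\psi)$ is the set of $\kappa\in\mathfrak C^S$ with $\psi(s)$ a prefix of $\kappa(s)$ for all $s$; $\Phi_\psi(\kappa)(s)=\psi(s)\cdot\kappa(s)$ is the canonical homeomorphism $\mathfrak C^S\to B(\psi)$; for $\gamma\in G$, $\tau_\gamma(\kappa)(s)=\kappa(\gamma^{-1}s)$, and the twist homeomorphism $B(\varphi)\to B(\psi)$ associated to $\gamma$ is $\Phi_\psi\tau_\gamma\Phi_\varphi^{-1}$. For $m\ge1$, let $\mathfrak C^S(m)=\mathfrak C^S_1\sqcup\dots\sqcup\mathfrak C^S_m$ be a disjoint union of $m$ copies of $\mathfrak C^S$, with $\mathfrak C^S(1)=\mathfrak C^S$. A dyadic brick in $\mathfrak C^S(m)$ is a dyadic brick in one of the cubes; canonical and twist homeomorphisms between bricks in possibly different cubes are defined via the identifications of each cube with $\mathfrak C^S$. $S\mathcal V_G$ is the set of homeomorphisms $h\colon\mathfrak C^S(m)\to\mathfrak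 C^S(n)$ ($m,n\ge1$) for which there are partitions of $\mathfrak C^S(m)$ and $\mathfrak C^S(n)$ into the same number of dyadic bricks $B_i$, $B_i'$ and $\gamma_i\in G$ such that $h$ maps each $B_i$ to $B_i'$ by the twist homeomorphism associated to $\gamma_i$; $S\mathcal V$ is the subset where all $\gamma_i$ may be taken trivial. The number $n$ is the rank of $h$ and $m$ its corank. The direct sum of $h\colon\mathfrak C^S(m)\to\mathfrak C^S(n)$ and $h'\colon\mathfrak C^S(m')\to\mathfrak C^S(n')$ is $h\oplus h'\colon\mathfrak C^S(m+m')\to\mathfrak C^S(n+n')$, acting as $h$ from the first $m$ cubes to the first $n$ cubes and as $h'$ from the remaining $m'$ cubes to the remaining $n'$ cubes. A $G$-twist of $\mathfrak C^S(n)$ is a map $\tau_{\gamma_1}\oplus\dots\oplus\tau_{\gamma_n}$ with $\gamma_i\in G$. A very elementary expansion of a partition $\mathcal P$ of $\mathfrak C^S(m)$ into dyadic bricks is a partition $\mathcal P'$ into dyadic bricks such that every brick of $\mathcal P$ is a union of at most two bricks of $\mathcal P'$; a dyadic partition of $\mathfrak C^S(m)$ is one obtained from $\{\mathfrak C^S_1,\dots,\mathfrak C^S_m\}$ by finitely many very elementary expansions. A multicolored forest is a homeomorphism $f\colon\mathfrak C^S(m)\to\mathfrak C^S(n)$ that maps the bricks $B_1,\dots,B_n$ of some dyadic partition of $\mathfrak C^S(m)$ onto $\mathfrak C^S_1,\dots,\mathfrak C^S_n$ respectively by canonical homeomorphisms. *)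

theory Defs
  imports "HOL-Analysis.Analysis"
begin

text \<open>Cantor space \<open>\<CC> = {0,1}^\<omega>\<close> is \<open>nat \<Rightarrow> bool\<close> (product topology of the discrete
  space \<open>bool\<close>).  The index set \<open>S\<close> is the (nonempty) type \<open>'s\<close>; \<open>\<CC>^S\<close> is
  \<open>'s \<Rightarrow> nat \<Rightarrow> bool\<close> with the product topology.  The disjoint union
  \<open>\<CC>^S(m)\<close> of \<open>m\<close> cubes is the subspace \<open>{0..<m} \<times> UNIV\<close> of \<open>nat \<times> ('s \<Rightarrow> nat \<Rightarrow> bool)\<close>;
  the cube with index \<open>j\<close> (0-based) is \<open>{j} \<times> UNIV\<close>.\<close>

type_synonym cantor = "nat \<Rightarrow> bool"
type_synonym 's cube_pt = "nat \<times> ('s \<Rightarrow> cantor)"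

definition cubes :: "nat \<Rightarrow> 's cube_pt set" where
  "cubes m = {0..<m} \<times> UNIV"

definition perm_subgroup :: "('s \<Rightarrow> 's) set \<Rightarrow> bool" where
  "perm_subgroup G \<longleftrightarrow> (\<forall>g\<in>G. bij g) \<and> id \<in> G \<and>
     (\<forall>g\<in>G. \<forall>h\<in>G. g \<circ> h \<in> G) \<and> (\<forall>g\<in>G. inv g \<in> G)"

definition is_prefix :: "bool list \<Rightarrow> cantor \<Rightarrow> bool" where
  "is_prefix w x \<longleftrightarrow> (\<forall>i<length w. x i = w ! i)"

definition concat_seq :: "bool list \<Rightarrow> cantor \<Rightarrow> cantor" where
  "concat_seq w x = (\<lambda>i. if i < length w then w ! i else x (i - length w))"

definition fin_supp :: "('s \<Rightarrow> bool list) \<Rightarrow> bool" where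
  "fin_supp \<psi> \<longleftrightarrow> finite {s. \<psi> s \<noteq> []}"

definition brick :: "('s \<Rightarrow> bool list) \<Rightarrow> ('s \<Rightarrow> cantor) set" where
  "brick \<psi> = {\<kappa>. \<forall>s. is_prefix (\<psi> s) (\<kappa> s)}"

definition Phi :: "('s \<Rightarrow> bool list) \<Rightarrow> ('s \<Rightarrow> cantor) \<Rightarrow> ('s \<Rightarrow> cantor)" where
  "Phi \<psi> \<kappa> = (\<lambda>s. concat_seq (\<psi> s) (\<kappa> s))"

definition Phi_inv :: "('s \<Rightarrow> bool list) \<Rightarrow> ('s \<Rightarrow> cantor) \<Rightarrow> ('s \<Rightarrow> cantor)" where
  "Phi_inv \<psi> \<kappa> = (\<lambda>s i. \<kappa> s (i + length (\<psi> s)))"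

definition tau :: "('s \<Rightarrow> 's) \<Rightarrow> ('s \<Rightarrow> cantor) \<Rightarrow> ('s \<Rightarrow> cantor)" where
  "tau \<gamma> \<kappa> = (\<lambda>s. \<kappa> (inv \<gamma> s))"

text \<open>A dyadic brick of \<CC>^S(m) is described by a cube index j and a finitely
  supported \<psi>; its point set:\<close>
definition brick_in :: "nat \<times> ('s \<Rightarrow> bool list) \<Rightarrow> 's cube_pt set" where
  "brick_in b = {fst b} \<times> brick (snd b)"

definition valid_brick :: "nat \<Rightarrow> nat \<times> ('s \<Rightarrow> bool list) \<Rightarrow> bool" where
  "valid_brick m b \<longleftrightarrow> fst b < m \<and> fin_supp (snd b)"

definition twist_map :: "nat \<times> ('s \<Rightarrow> bool list) \<Rightarrow> nat \<times> ('s \<Rightarrow> bool list) \<Rightarrow> ('s \<Rightarrow> 's)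
    \<Rightarrow> 's cube_pt \<Rightarrow> 's cube_pt" where
  "twist_map b b' \<gamma> x = (fst b', Phi (snd b') (tau \<gamma> (Phi_inv (snd b) (snd x))))"

definition canon_map :: "nat \<times> ('s \<Rightarrow> bool list) \<Rightarrow> nat \<times> ('s \<Rightarrow> bool list)
    \<Rightarrow> 's cube_pt \<Rightarrow> 's cube_pt" where
  "canon_map b b' x = (fst b', Phi (snd b') (Phi_inv (snd b) (snd x)))"

definition brick_partition :: "nat \<Rightarrow> (nat \<times> ('s \<Rightarrow> bool list)) list \<Rightarrow> bool" where
  "brick_partition m P \<longleftrightarrow> (\<forall>b\<in>set P. valid_brick m b) \<and>
     (\<forall>i<length P. \<forall>j<length P. i \<noteq> j \<longrightarrow> brick_in (P ! i) \<inter> brick_in (P ! j) = {}) \<and>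
     (\<Union>b\<in>set P. brick_in b) = cubes m"

text \<open>h \<in> S\<V>_G with corank m and rank n\<close>
definition SV_G :: "('s \<Rightarrow> 's) set \<Rightarrow> nat \<Rightarrow> nat \<Rightarrow> ('s cube_pt \<Rightarrow> 's cube_pt) \<Rightarrow> bool" where
  "SV_G G m n h \<longleftrightarrow> m \<ge> 1 \<and> n \<ge> 1 \<and>
     homeomorphic_map (top_of_set (cubes m)) (top_of_set (cubes n)) h \<and>
     (\<exists>P Q \<gamma>s. brick_partition m P \<and> brick_partition n Q \<and>
        length Q = length P \<and> length \<gamma>s = length P \<and> set \<gamma>s \<subseteq> G \<and>
        (\<forall>i<length P. \<forall>x\<in>brick_in (P ! i). h x = twist_map (P ! i) (Q ! i) (\<gamma>s ! i) x))"

definition SV :: "nat \<Rightarrow> nat \<Rightarrow> ('s cube_pt \<Rightarrow> 's cube_pt) \<Rightarrow> bool" where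
  "SV m n h \<longleftrightarrow> SV_G {id} m n h"

definition is_brick_set :: "nat \<Rightarrow> 's cube_pt set \<Rightarrow> bool" where
  "is_brick_set m B \<longleftrightarrow> (\<exists>b. valid_brick m b \<and> B = brick_in b)"

definition brick_set_partition :: "nat \<Rightarrow> 's cube_pt set set \<Rightarrow> bool" where
  "brick_set_partition m \<P> \<longleftrightarrow> finite \<P> \<and> (\<forall>B\<in>\<P>. is_brick_set m B) \<and>
     (\<forall>B\<in>\<P>. \<forall>B'\<in>\<P>. B \<noteq> B' \<longrightarrow> B \<inter> B' = {}) \<and> \<Union>\<P> = cubes m"

definition very_elementary_expansion :: "nat \<Rightarrow> 's cube_pt set set \<Rightarrow> 's cube_pt set set \<Rightarrow> bool" where
  "very_elementary_expansion m \<P> \<P>' \<longleftrightarrow> brick_set_partition m \<P>' \<and>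
     (\<forall>B\<in>\<P>. \<exists>\<X>\<subseteq>\<P>'. card \<X> \<le> 2 \<and> \<Union>\<X> = B)"

inductive dyadic_partition :: "nat \<Rightarrow> 's cube_pt set set \<Rightarrow> bool" for m where
  base: "dyadic_partition m ((\<lambda>j. {j} \<times> UNIV) ` {0..<m})"
| step: "dyadic_partition m \<P> \<Longrightarrow> very_elementary_expansion m \<P> \<P>' \<Longrightarrow> dyadic_partition m \<P>'"

definition multicolored_forest :: "nat \<Rightarrow> nat \<Rightarrow> ('s cube_pt \<Rightarrow> 's cube_pt) \<Rightarrow> bool" where
  "multicolored_forest m n f \<longleftrightarrow> m \<ge> 1 \<and> n \<ge> 1 \<and>
     homeomorphic_map (top_of_set (cubes m)) (top_of_set (cubes n)) f \<and>
     (\<exists>L. length L = n \<and> (\<forall>b\<in>set L. valid_brick m b) \<and>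
        inj_on brick_in (set L) \<and> distinct L \<and>
        dyadic_partition m (brick_in ` set L) \<and>
        (\<forall>i<n. \<forall>x\<in>brick_in (L ! i). f x = canon_map (L ! i) (i, \<lambda>s. []) x))"

definition G_twist :: "('s \<Rightarrow> 's) set \<Rightarrow> nat \<Rightarrow> ('s cube_pt \<Rightarrow> 's cube_pt) \<Rightarrow> bool" where
  "G_twist G n t \<longleftrightarrow> (\<exists>\<gamma>s. length \<gamma>s = n \<and> set \<gamma>s \<subseteq> G \<and>
     (\<forall>x\<in>cubes n. t x = (fst x, tau (\<gamma>s ! fst x) (snd x))))"

end

theory Submission
  imports Defs
begin


lemma is_prefix_append: "is_prefix (w @ v) x \<longleftrightarrow> is_prefix w x \<and> is_prefix v (\<lambda>i. x (i + length w))"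
proof
  assume a: "is_prefix (w @ v) x"
  show "is_prefix w x \<and> is_prefix v (\<lambda>i. x (i + length w))"
  proof
    show "is_prefix w x" unfolding is_prefix_def
    proof (intro allI impI)
      fix i assume "i < length w"
      then show "x i = w ! i" using a unfolding is_prefix_def by (auto simp: nth_append)
    qed
    show "is_prefix v (\<lambda>i. x (i + length w))" unfolding is_prefix_def
    proof (intro allI impI)
      fix i assume "i < length v"
      then show "x (i + length w) = v ! i" using a[unfolded is_prefix_def, rule_format, of "i + length w"]
        by (simp add: nth_append)
    qed
  qed
next
  assume a: "is_prefix w x \<and> is_prefix v (\<lambda>i. x (i + length w))"
  show "is_prefix (w @ v) x" unfolding is_prefix_def
  proof (intro allI impI)
    fix i assume i: "i < length (w @ v)"
    show "x i = (w @ v) ! i"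
    proof (cases "i < length w")
      case True then show ?thesis using a unfolding is_prefix_def by (simp add: nth_append)
    next
      case False
      then have "i - length w < length v" using i by simp
      then have "x (i - length w + length w) = v ! (i - length w)"
        using a unfolding is_prefix_def by blast
      then show ?thesis using False by (simp add: nth_append)
    qed
  qed
qed

lemma concat_nth: "i < length w \<Longrightarrow> concat_seq w y i = w ! i"
  by (simp add: concat_seq_def)

lemma is_prefix_concat [simp]: "is_prefix w (concat_seq w y)"
  by (simp add: is_prefix_def concat_seq_def)

lemma concat_shift [simp]: "(\<lambda>i. concat_seq w y (i + length w)) = y"
  by (simp add: concat_seq_def)

lemma concat_Nil [simp]: "concat_seq [] y = y"
  by (simp add: concat_seq_def)

lemma prefix_concat_shift: "is_prefix w x \<Longrightarrow> concat_seq w (\<lambda>i. x (i + length w)) = x"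
  by (auto simp: is_prefix_def concat_seq_def fun_eq_iff)

lemma is_prefix_drop: "is_prefix w x \<Longrightarrow> is_prefix (drop k w) (\<lambda>i. x (i + k))"
  by (auto simp: is_prefix_def add.commute)

lemma is_prefix_take: "is_prefix w x \<Longrightarrow> is_prefix (take k w) x"
  by (auto simp: is_prefix_def)

lemma is_prefix_unique: "is_prefix w x \<Longrightarrow> is_prefix w' x \<Longrightarrow> length w = length w' \<Longrightarrow> w = w'"
  by (auto simp: is_prefix_def intro: nth_equalityI)

lemma concat_append: "concat_seq (w @ v) y = concat_seq w (concat_seq v y)"
  by (auto simp: concat_seq_def fun_eq_iff nth_append)

lemma is_prefix_concat_append: "is_prefix (w @ v) (concat_seq w y) \<longleftrightarrow> is_prefix v y"
  by (simp add: is_prefix_append)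

lemma is_prefix_map: "is_prefix (map x [0..<k]) x"
  by (simp add: is_prefix_def)

lemma is_prefix_take_map: "is_prefix w x \<Longrightarrow> length w \<le> k \<Longrightarrow> take (length w) (map x [0..<k]) = w"
  by (auto simp: is_prefix_def intro!: nth_equalityI)

lemma is_prefix_longer: "is_prefix w x \<Longrightarrow> is_prefix v x \<Longrightarrow> length w \<le> length v \<Longrightarrow> take (length w) v = w"
  by (auto simp: is_prefix_def intro!: nth_equalityI)



lemma brick_point: "(fst b, Phi (snd b) \<kappa>) \<in> brick_in b"
  by (simp add: brick_in_def brick_def Phi_def)

lemma Phi_in_brick: "Phi \<psi> \<kappa> \<in> brick \<psi>"
  by (simp add: brick_def Phi_def)

lemma brick_inj_aux:
  assumes "brick \<psi> = brick \<phi>" shows "length (\<phi> s) \<le> length (\<psi> s)"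
proof (rule ccontr)
  assume "\<not> ?thesis"
  have "Phi \<psi> (\<lambda>_ _. False) \<in> brick \<phi>" using Phi_in_brick[of \<psi> "\<lambda>_ _. False"] unfolding assms .
  then have 1: "is_prefix (\<phi> s) (concat_seq (\<psi> s) (\<lambda>_. False))"
    by (simp add: brick_def Phi_def)
  have "Phi \<psi> (\<lambda>_ _. True) \<in> brick \<phi>" using Phi_in_brick[of \<psi> "\<lambda>_ _. True"] unfolding assms .
  then have 2: "is_prefix (\<phi> s) (concat_seq (\<psi> s) (\<lambda>_. True))"
    by (simp add: brick_def Phi_def)
  have l: "length (\<psi> s) < length (\<phi> s)" using \<open>\<not> _\<close> by simp
  have "concat_seq (\<psi> s) (\<lambda>_. False) (length (\<psi> s)) = \<phi> s ! length (\<psi> s)"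
    using 1 l unfolding is_prefix_def by blast
  moreover have "concat_seq (\<psi> s) (\<lambda>_. True) (length (\<psi> s)) = \<phi> s ! length (\<psi> s)"
    using 2 l unfolding is_prefix_def by blast
  ultimately show False by (simp add: concat_seq_def)
qed

lemma brick_inj: assumes "brick \<psi> = brick \<phi>" shows "\<psi> = \<phi>"
proof
  fix s
  have "length (\<phi> s) = length (\<psi> s)" using brick_inj_aux[OF assms] brick_inj_aux[OF assms[symmetric]]
    by (simp add: le_antisym)
  moreover have "Phi \<psi> (\<lambda>_ _. False) \<in> brick \<phi>" using Phi_in_brick[of \<psi> "\<lambda>_ _. False"] unfolding assms .
  then have "is_prefix (\<phi> s) (concat_seq (\<psi> s) (\<lambda>_. False))"
    by (simp add: brick_def Phi_def)
  ultimately show "\<psi> s = \<phi> s"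
    using is_prefix_unique[of "\<psi> s" "concat_seq (\<psi> s) (\<lambda>_. False)" "\<phi> s"] by simp
qed

lemma brick_in_inj: "brick_in b = brick_in b' \<Longrightarrow> b = b'"
proof -
  assume a: "brick_in b = brick_in b'"
  have "(fst b, Phi (snd b) (\<lambda>_ _. False)) \<in> brick_in b'" using brick_point[of b "\<lambda>_ _. False"] unfolding a .
  then have "fst b = fst b'" by (simp add: brick_in_def)
  with a have "brick (snd b) = brick (snd b')" unfolding brick_in_def
    by (auto simp: set_eq_iff)
  then have "snd b = snd b'" by (rule brick_inj)
  then show ?thesis using \<open>fst b = fst b'\<close> by (simp add: prod_eq_iff)
qed

lemma brick_in_nonempty: "brick_in b \<noteq> {}"
  using brick_point by blast

definition sub :: "nat \<times> ('s \<Rightarrow> bool list) \<Rightarrow> ('s \<Rightarrow> nat) \<Rightarrow> (nat \<times> ('s \<Rightarrow> bool list)) set" where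
  "sub b l = {(fst b, \<sigma>) | \<sigma>. \<forall>s. length (\<sigma> s) = l s \<and> take (length (snd b s)) (\<sigma> s) = snd b s}"

definition Sub :: "(nat \<times> ('s \<Rightarrow> bool list)) set \<Rightarrow> (nat \<times> ('s \<Rightarrow> bool list) \<Rightarrow> 's \<Rightarrow> nat) \<Rightarrow> (nat \<times> ('s \<Rightarrow> bool list)) set" where
  "Sub T L = (\<Union>b\<in>T. sub b (L b))"

lemma brick_sub_mono: "\<forall>s. take (length (\<psi> s)) (\<sigma> s) = \<psi> s \<Longrightarrow> brick \<sigma> \<subseteq> brick \<psi>"
proof
  fix \<kappa> assume a: "\<forall>s. take (length (\<psi> s)) (\<sigma> s) = \<psi> s" and k: "\<kappa> \<in> brick \<sigma>"
  have "is_prefix (\<psi> s) (\<kappa> s)" for s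
    using is_prefix_take[of "\<sigma> s" "\<kappa> s" "length (\<psi> s)"] k a by (simp add: brick_def)
  then show "\<kappa> \<in> brick \<psi>" by (simp add: brick_def)
qed

lemma sub_subset: "c \<in> sub b l \<Longrightarrow> brick_in c \<subseteq> brick_in b"
proof -
  assume "c \<in> sub b l"
  then obtain \<sigma> where c: "c = (fst b, \<sigma>)" and t: "\<forall>s. take (length (snd b s)) (\<sigma> s) = snd b s"
    unfolding sub_def by blast
  have "brick \<sigma> \<subseteq> brick (snd b)" using t by (rule brick_sub_mono)
  then show ?thesis unfolding c brick_in_def by auto
qed

lemma sub_self: "\<forall>s. l s = length (snd b s) \<Longrightarrow> sub b l = {b}"
proof
  assume a: "\<forall>s. l s = length (snd b s)"
  show "sub b l \<subseteq> {b}"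
  proof
    fix c assume "c \<in> sub b l"
    then obtain \<sigma> where c: "c = (fst b, \<sigma>)" and t: "\<forall>s. length (\<sigma> s) = l s \<and> take (length (snd b s)) (\<sigma> s) = snd b s"
      unfolding sub_def by blast
    have "\<sigma> s = snd b s" for s using t a by (metis take_all order_refl)
    then have "\<sigma> = snd b" by blast
    then show "c \<in> {b}" using c by simp
  qed
  show "{b} \<subseteq> sub b l" using a unfolding sub_def by (auto intro: exI[of _ "snd b"])
qed

lemma brick_split: "brick (\<sigma>(s := \<sigma> s @ [False])) \<union> brick (\<sigma>(s := \<sigma> s @ [True])) = brick \<sigma>"
proof -
  have "\<kappa> \<in> brick (\<sigma>(s := \<sigma> s @ [\<kappa> s (length (\<sigma> s))]))" if "\<kappa> \<in> brick \<sigma>" for \<kappa>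
  proof -
    have "is_prefix (\<sigma> s @ [\<kappa> s (length (\<sigma> s))]) (\<kappa> s)"
    proof -
      have p: "is_prefix (\<sigma> s) (\<kappa> s)" using that by (simp add: brick_def)
      have "is_prefix [\<kappa> s (length (\<sigma> s))] (\<lambda>i. \<kappa> s (i + length (\<sigma> s)))" by (simp add: is_prefix_def)
      with p show ?thesis by (simp add: is_prefix_append)
    qed
    then show ?thesis using that unfolding brick_def by simp
  qed
  moreover have "brick (\<sigma>(s := \<sigma> s @ [x])) \<subseteq> brick \<sigma>" for x
    by (rule brick_sub_mono) simp
  ultimately show ?thesis
  proof -
    assume h1: "\<And>\<kappa>. \<kappa> \<in> brick \<sigma> \<Longrightarrow> \<kappa> \<in> brick (\<sigma>(s := \<sigma> s @ [\<kappa> s (length (\<sigma> s))]))"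
      and h2: "\<And>x. brick (\<sigma>(s := \<sigma> s @ [x])) \<subseteq> brick \<sigma>"
    have "brick \<sigma> \<subseteq> brick (\<sigma>(s := \<sigma> s @ [False])) \<union> brick (\<sigma>(s := \<sigma> s @ [True]))"
    proof
      fix \<kappa> assume k: "\<kappa> \<in> brick \<sigma>"
      show "\<kappa> \<in> brick (\<sigma>(s := \<sigma> s @ [False])) \<union> brick (\<sigma>(s := \<sigma> s @ [True]))"
      proof (cases "\<kappa> s (length (\<sigma> s))")
        case True then show ?thesis using h1[OF k] by simp
      next
        case False then show ?thesis using h1[OF k] by simp
      qed
    qed
    with h2[of False] h2[of True] show ?thesis by (intro subset_antisym Un_least)
  qed
qed



lemma base_brick: "{j} \<times> UNIV = brick_in (j, \<lambda>_. [])"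
  by (simp add: brick_in_def brick_def is_prefix_def)

lemma base_partition: "brick_set_partition m ((\<lambda>j. {j} \<times> UNIV) ` {0..<m})"
  unfolding brick_set_partition_def
proof (intro conjI ballI impI)
  show "finite ((\<lambda>j. {j} \<times> UNIV) ` {0..<m})" by simp
next
  fix B assume "B \<in> (\<lambda>j. ({j} :: nat set) \<times> (UNIV :: ('a \<Rightarrow> cantor) set)) ` {0..<m}"
  then obtain j where "j < m" "B = brick_in (j, \<lambda>_. [])" using base_brick by fastforce
  moreover have "valid_brick m (j, \<lambda>_. [])" using \<open>j < m\<close> by (simp add: valid_brick_def fin_supp_def)
  ultimately show "is_brick_set m B" unfolding is_brick_set_def by blast
next
  fix B B' assume "B \<in> (\<lambda>j. ({j} :: nat set) \<times> (UNIV :: ('a \<Rightarrow> cantor) set)) ` {0..<m}"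
     "B' \<in> (\<lambda>j. ({j} :: nat set) \<times> (UNIV :: ('a \<Rightarrow> cantor) set)) ` {0..<m}" "B \<noteq> B'"
  then show "B \<inter> B' = {}" by auto
next
  show "\<Union> ((\<lambda>j. ({j} :: nat set) \<times> (UNIV :: ('a \<Rightarrow> cantor) set)) ` {0..<m}) = cubes m"
    by (auto simp: cubes_def)
qed

lemma dyadic_partition_imp: "dyadic_partition m P \<Longrightarrow> brick_set_partition m P"
  by (induction rule: dyadic_partition.induct)
     (auto simp: base_partition very_elementary_expansion_def)

lemma brick_in_subset_cubes: "valid_brick m b \<Longrightarrow> brick_in b \<subseteq> cubes m"
  by (auto simp: brick_in_def cubes_def valid_brick_def)

lemma finite_len_funs:
  assumes "finite {s. l s \<noteq> 0}"
  shows "finite {\<sigma> :: 's \<Rightarrow> bool list. \<forall>s. length (\<sigma> s) = l s}"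
proof -
  let ?K = "{s. l s \<noteq> 0}"
  have "finite (PiE ?K (\<lambda>s. {w :: bool list. length w = l s}))"
  proof (intro finite_PiE)
    show "finite ?K" by (rule assms)
    fix s show "finite {w :: bool list. length w = l s}"
      using finite_lists_length_eq[of "UNIV::bool set" "l s"] by simp
  qed
  then have "finite ((\<lambda>f s. if s \<in> ?K then f s else []) ` PiE ?K (\<lambda>s. {w :: bool list. length w = l s}))"
    by simp
  moreover have "{\<sigma> :: 's \<Rightarrow> bool list. \<forall>s. length (\<sigma> s) = l s} \<subseteq>
      (\<lambda>f s. if s \<in> ?K then f s else []) ` PiE ?K (\<lambda>s. {w :: bool list. length w = l s})"
  proof
    fix \<sigma> :: "'s \<Rightarrow> bool list" assume a: "\<sigma> \<in> {\<sigma>. \<forall>s. length (\<sigma> s) = l s}"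
    show "\<sigma> \<in> (\<lambda>f s. if s \<in> ?K then f s else []) ` PiE ?K (\<lambda>s. {w :: bool list. length w = l s})"
    proof
      show "restrict \<sigma> ?K \<in> PiE ?K (\<lambda>s. {w :: bool list. length w = l s})" using a by auto
      show "\<sigma> = (\<lambda>s. if s \<in> ?K then restrict \<sigma> ?K s else [])" using a by (auto simp: fun_eq_iff) (metis length_0_conv)
    qed
  qed
  ultimately show ?thesis by (rule finite_subset[rotated])
qed



lemma sub_memE:
  assumes "c \<in> sub b l"
  obtains \<sigma> where "c = (fst b, \<sigma>)" "\<And>s. length (\<sigma> s) = l s" "\<And>s. take (length (snd b s)) (\<sigma> s) = snd b s"
  using assms unfolding sub_def by blast

lemma Sub_memE:
  assumes "c \<in> Sub T L"
  obtains b \<sigma> where "b \<in> T" "c = (fst b, \<sigma>)" "\<And>s. length (\<sigma> s) = L b s" "\<And>s. take (length (snd b s)) (\<sigma> s) = snd b s"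
  using assms unfolding Sub_def by (auto elim!: sub_memE)

lemma sub_memI:
  "(\<And>s. length (\<sigma> s) = l s) \<Longrightarrow> (\<And>s. take (length (snd b s)) (\<sigma> s) = snd b s) \<Longrightarrow> (fst b, \<sigma>) \<in> sub b l"
  unfolding sub_def by blast

locale subctx =
  fixes m :: nat and T :: "(nat \<times> ('s \<Rightarrow> bool list)) set" and K :: "'s set"
    and L :: "nat \<times> ('s \<Rightarrow> bool list) \<Rightarrow> 's \<Rightarrow> nat"
  assumes finT: "finite T" and valT: "\<forall>b\<in>T. valid_brick m b" and finK: "finite K"
    and Lge: "\<forall>b\<in>T. \<forall>s. length (snd b s) \<le> L b s"
    and LK: "\<forall>b\<in>T. \<forall>s. s \<notin> K \<longrightarrow> L b s = length (snd b s)"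
begin

lemma Sub_valid: "c \<in> Sub T L \<Longrightarrow> valid_brick m c"
proof -
  assume "c \<in> Sub T L"
  then obtain b \<sigma> where b: "b \<in> T" "c = (fst b, \<sigma>)" "\<And>s. length (\<sigma> s) = L b s"
    by (auto elim: Sub_memE)
  have "{s. \<sigma> s \<noteq> []} \<subseteq> K \<union> {s. snd b s \<noteq> []}"
    using b LK by auto (metis length_0_conv)
  moreover have "finite {s. snd b s \<noteq> []}" using valT b(1) by (simp add: valid_brick_def fin_supp_def)
  ultimately have "fin_supp \<sigma>" unfolding fin_supp_def using finK by (meson finite_Un finite_subset)
  then show ?thesis using b valT by (simp add: valid_brick_def)
qed

lemma Sub_finite: "finite (Sub T L)"
  unfolding Sub_def
proof (intro finite_UN_I finT)
  fix b assume b: "b \<in> T"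
  have "{s. L b s \<noteq> 0} \<subseteq> K \<union> {s. snd b s \<noteq> []}" using b LK by auto
  moreover have "finite {s. snd b s \<noteq> []}" using valT b by (simp add: valid_brick_def fin_supp_def)
  ultimately have "finite {s. L b s \<noteq> 0}" using finK by (meson finite_Un finite_subset)
  then have "finite ({fst b} \<times> {\<sigma> :: 's \<Rightarrow> bool list. \<forall>s. length (\<sigma> s) = L b s})"
    using finite_len_funs by blast
  moreover have "sub b (L b) \<subseteq> {fst b} \<times> {\<sigma> :: 's \<Rightarrow> bool list. \<forall>s. length (\<sigma> s) = L b s}"
    by (auto elim: sub_memE)
  ultimately show "finite (sub b (L b))" by (rule finite_subset[rotated])
qed

lemma Sub_partition:
  assumes part: "brick_set_partition m (brick_in ` T)"
  shows "brick_set_partition m (brick_in ` Sub T L)"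
  unfolding brick_set_partition_def
proof (intro conjI ballI impI)
  show "finite (brick_in ` Sub T L)" using Sub_finite by simp
next
  fix B assume "B \<in> brick_in ` Sub T L"
  then show "is_brick_set m B" using Sub_valid unfolding is_brick_set_def by blast
next
  fix B B' assume B: "B \<in> brick_in ` Sub T L" and B': "B' \<in> brick_in ` Sub T L" and ne: "B \<noteq> B'"
  obtain c where c: "c \<in> Sub T L" "B = brick_in c" using B by blast
  obtain c' where c': "c' \<in> Sub T L" "B' = brick_in c'" using B' by blast
  obtain b \<sigma> where b: "b \<in> T" "c = (fst b, \<sigma>)" "\<And>s. length (\<sigma> s) = L b s"
      "\<And>s. take (length (snd b s)) (\<sigma> s) = snd b s"
    using c(1) by (auto elim: Sub_memE)
  obtain b' \<sigma>' where b': "b' \<in> T" "c' = (fst b', \<sigma>')" "\<And>s. length (\<sigma>' s) = L b' s"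
      "\<And>s. take (length (snd b' s)) (\<sigma>' s) = snd b' s"
    using c'(1) by (auto elim: Sub_memE)
  show "B \<inter> B' = {}"
  proof (rule ccontr)
    assume "B \<inter> B' \<noteq> {}"
    then obtain x where x: "x \<in> B" "x \<in> B'" by blast
    have sb: "brick_in c \<subseteq> brick_in b" using b by (intro sub_subset[of c b "L b"]) (auto intro: sub_memI)
    have sb': "brick_in c' \<subseteq> brick_in b'" using b' by (intro sub_subset[of c' b' "L b'"]) (auto intro: sub_memI)
    have "brick_in b = brick_in b'"
    proof (rule ccontr)
      assume "brick_in b \<noteq> brick_in b'"
      then have "brick_in b \<inter> brick_in b' = {}" using part b(1) b'(1) unfolding brick_set_partition_def by blast
      then show False using x sb sb' c c' by blast
    qed
    then have bb: "b = b'" by (rule brick_in_inj)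
    have "\<sigma> s = \<sigma>' s" for s
    proof -
      have "is_prefix (\<sigma> s) (snd x s)" using x(1) c b(2) unfolding brick_in_def brick_def by auto
      moreover have "is_prefix (\<sigma>' s) (snd x s)" using x(2) c' b'(2) unfolding brick_in_def brick_def by auto
      ultimately show ?thesis using is_prefix_unique b(3) b'(3) bb by metis
    qed
    then have "c = c'" using b(2) b'(2) bb by auto
    then show False using ne c c' by simp
  qed
next
  show "\<Union> (brick_in ` Sub T L) = cubes m"
  proof
    show "\<Union> (brick_in ` Sub T L) \<subseteq> cubes m"
      using Sub_valid brick_in_subset_cubes by blast
  next
    show "cubes m \<subseteq> \<Union> (brick_in ` Sub T L)"
    proof
      fix x :: "'s cube_pt" assume "x \<in> cubes m"
      then have "x \<in> \<Union> (brick_in ` T)" using part unfolding brick_set_partition_def by simp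
      then obtain b where b: "b \<in> T" "x \<in> brick_in b" by blast
      define \<sigma> where "\<sigma> = (\<lambda>s. map (snd x s) [0..<L b s])"
      have xb: "fst x = fst b" "\<And>s. is_prefix (snd b s) (snd x s)"
        using b(2) unfolding brick_in_def brick_def by auto
      have "(fst b, \<sigma>) \<in> sub b (L b)"
      proof (rule sub_memI)
        fix s show "length (\<sigma> s) = L b s" by (simp add: \<sigma>_def)
        show "take (length (snd b s)) (\<sigma> s) = snd b s"
          unfolding \<sigma>_def using is_prefix_take_map[OF xb(2)] Lge b(1) by blast
      qed
      then have "(fst b, \<sigma>) \<in> Sub T L" using b(1) unfolding Sub_def by blast
      moreover have "x \<in> brick_in (fst b, \<sigma>)"
      proof -
        have "snd x \<in> brick \<sigma>" unfolding brick_def \<sigma>_def by (simp add: is_prefix_map)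
        then show ?thesis using xb(1) unfolding brick_in_def by (simp add: mem_Times_iff)
      qed
      ultimately show "x \<in> \<Union> (brick_in ` Sub T L)" by blast
    qed
  qed
qed

end



definition exc :: "(nat \<times> ('s \<Rightarrow> bool list)) set \<Rightarrow> 's set \<Rightarrow> (nat \<times> ('s \<Rightarrow> bool list) \<Rightarrow> 's \<Rightarrow> nat) \<Rightarrow> nat" where
  "exc T K L = (\<Sum>b\<in>T. \<Sum>s\<in>K. L b s - length (snd b s))"

lemma card_two_le: "card {x, y} \<le> 2"
  by (cases "x = y") auto

lemma Sub_dyadic:
  assumes finT: "finite T" and dy: "dyadic_partition m (brick_in ` T)" and valT: "\<forall>b\<in>T. valid_brick m b"
    and finK: "finite K"
  shows "(\<forall>b\<in>T. \<forall>s. length (snd b s) \<le> L b s) \<Longrightarrow> (\<forall>b\<in>T. \<forall>s. s \<notin> K \<longrightarrow> L b s = length (snd b s))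
    \<Longrightarrow> dyadic_partition m (brick_in ` Sub T L)"
proof (induction "exc T K L" arbitrary: L rule: less_induct)
  case (less L)
  interpret subctx m T K L using less.prems finT valT finK by unfold_locales auto
  show ?case
  proof (cases "\<forall>b\<in>T. \<forall>s\<in>K. L b s = length (snd b s)")
    case True
    then have "\<forall>b\<in>T. \<forall>s. L b s = length (snd b s)" using less.prems by blast
    then have "\<forall>b\<in>T. sub b (L b) = {b}" by (intro ballI sub_self) blast
    then have "Sub T L = T" unfolding Sub_def by simp
    then show ?thesis using dy by simp
  next
    case False
    then obtain b0 s0 where b0: "b0 \<in> T" "s0 \<in> K" "L b0 s0 \<noteq> length (snd b0 s0)" by blast
    have "length (snd b0 s0) \<le> L b0 s0" using less.prems(1) b0(1) by blast
    with b0(3) have gt: "length (snd b0 s0) < L b0 s0" by simp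
    define L' where "L' = L(b0 := (L b0)(s0 := L b0 s0 - 1))"
    have p1: "\<forall>b\<in>T. \<forall>s. length (snd b s) \<le> L' b s" using less.prems(1) gt unfolding L'_def by auto
    have p2: "\<forall>b\<in>T. \<forall>s. s \<notin> K \<longrightarrow> L' b s = length (snd b s)" using less.prems(2) b0 unfolding L'_def by auto
    have "exc T K L' < exc T K L" unfolding exc_def
    proof (rule sum_strict_mono_ex1[OF finT])
      show "\<forall>b\<in>T. (\<Sum>s\<in>K. L' b s - length (snd b s)) \<le> (\<Sum>s\<in>K. L b s - length (snd b s))"
        unfolding L'_def by (auto intro!: sum_mono)
      show "\<exists>b\<in>T. (\<Sum>s\<in>K. L' b s - length (snd b s)) < (\<Sum>s\<in>K. L b s - length (snd b s))"
      proof (intro bexI[OF _ b0(1)] sum_strict_mono_ex1[OF finK])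
        show "\<forall>s\<in>K. L' b0 s - length (snd b0 s) \<le> L b0 s - length (snd b0 s)" unfolding L'_def by auto
        show "\<exists>s\<in>K. L' b0 s - length (snd b0 s) < L b0 s - length (snd b0 s)"
          using b0(2) gt unfolding L'_def by (intro bexI[of _ s0]) auto
      qed
    qed
    then have dy': "dyadic_partition m (brick_in ` Sub T L')" using less.hyps p1 p2 by blast
    have part: "brick_set_partition m (brick_in ` Sub T L)"
      by (rule Sub_partition) (rule dyadic_partition_imp[OF dy])
    have "very_elementary_expansion m (brick_in ` Sub T L') (brick_in ` Sub T L)"
      unfolding very_elementary_expansion_def
    proof (intro conjI part ballI)
      fix B assume "B \<in> brick_in ` Sub T L'"
      then obtain c where c: "c \<in> Sub T L'" "B = brick_in c" by blast
      then obtain b \<sigma> where b: "b \<in> T" "c = (fst b, \<sigma>)" "\<And>s. length (\<sigma> s) = L' b s"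
        "\<And>s. take (length (snd b s)) (\<sigma> s) = snd b s"
        by (auto elim: Sub_memE)
      show "\<exists>X\<subseteq>brick_in ` Sub T L. card X \<le> 2 \<and> \<Union> X = B"
      proof (cases "b = b0")
        case False
        then have "L' b = L b" unfolding L'_def by simp
        then have "c \<in> Sub T L" using b unfolding Sub_def by (auto intro!: bexI[OF _ b(1)] sub_memI)
        then show ?thesis using c by (intro exI[of _ "{B}"]) auto
      next
        case True
        define c0 where "c0 = (fst b0, \<sigma>(s0 := \<sigma> s0 @ [False]))"
        define c1 where "c1 = (fst b0, \<sigma>(s0 := \<sigma> s0 @ [True]))"
        have lens0: "length (\<sigma> s0) = L b0 s0 - 1" using b(3)[of s0] True unfolding L'_def by simp
        have mem: "(fst b0, \<sigma>(s0 := \<sigma> s0 @ [x])) \<in> Sub T L" for x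
        proof -
          have "(fst b0, \<sigma>(s0 := \<sigma> s0 @ [x])) \<in> sub b0 (L b0)"
          proof (rule sub_memI)
            fix s show "length ((\<sigma>(s0 := \<sigma> s0 @ [x])) s) = L b0 s"
              using b(3)[of s] lens0 gt True unfolding L'_def by auto
            show "take (length (snd b0 s)) ((\<sigma>(s0 := \<sigma> s0 @ [x])) s) = snd b0 s"
              using b(4)[of s] lens0 gt True by auto
          qed
          then show ?thesis using b0(1) unfolding Sub_def by blast
        qed
        show ?thesis
        proof (intro exI[of _ "{brick_in c0, brick_in c1}"] conjI)
          show "{brick_in c0, brick_in c1} \<subseteq> brick_in ` Sub T L"
            using mem unfolding c0_def c1_def by blast
          show "card {brick_in c0, brick_in c1} \<le> 2" by (rule card_two_le)
          have "brick_in c0 \<union> brick_in c1 = brick_in c"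
            using brick_split[of \<sigma> s0] b(2) True unfolding c0_def c1_def brick_in_def by auto
          then show "\<Union> {brick_in c0, brick_in c1} = B" using c by simp
        qed
      qed
    qed
    with dy' show ?thesis by (rule dyadic_partition.step)
  qed
qed



lemma cont_coord2: "continuous_on S (\<lambda>\<kappa> :: 's \<Rightarrow> cantor. \<kappa> s i)"
proof -
  have c1: "continuous_on S (\<lambda>\<kappa> :: 's \<Rightarrow> cantor. \<kappa> s)"
    by (rule continuous_on_subset[OF continuous_on_product_coordinates]) simp
  show ?thesis using continuous_on_product_then_coordinatewise[OF c1] .
qed

lemma cont_Phi: "continuous_on S (Phi \<psi>)"
proof (intro continuous_on_coordinatewise_then_product)
  fix s i
  show "continuous_on S (\<lambda>\<kappa>. Phi \<psi> \<kappa> s i)"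
  proof (cases "i < length (\<psi> s)")
    case True then show ?thesis by (simp add: Phi_def concat_seq_def)
  next
    case False then show ?thesis by (simp add: Phi_def concat_seq_def cont_coord2)
  qed
qed

lemma cont_Phi_inv: "continuous_on S (Phi_inv \<psi>)"
proof (intro continuous_on_coordinatewise_then_product)
  fix s i
  show "continuous_on S (\<lambda>\<kappa>. Phi_inv \<psi> \<kappa> s i)"
    by (simp add: Phi_inv_def cont_coord2)
qed

lemma open_brick: "fin_supp \<psi> \<Longrightarrow> open (brick \<psi>)"
proof -
  assume f: "fin_supp \<psi>"
  have eq: "brick \<psi> = (\<Inter>s\<in>{s. \<psi> s \<noteq> []}. \<Inter>i\<in>{..<length (\<psi> s)}. (\<lambda>\<kappa>. \<kappa> s i) -` {\<psi> s ! i})"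
    unfolding brick_def is_prefix_def by auto
  show ?thesis unfolding eq
    using f unfolding fin_supp_def
    by (intro open_INT) (auto intro!: open_vimage cont_coord2 simp: open_discrete)
qed

lemma open_brick_in: "valid_brick m b \<Longrightarrow> open (brick_in b)"
  unfolding brick_in_def valid_brick_def by (intro open_Times open_brick) (auto simp: open_discrete)

definition fidx :: "(nat \<times> ('s \<Rightarrow> bool list)) list \<Rightarrow> 's cube_pt \<Rightarrow> nat" where
  "fidx L x = (SOME i. i < length L \<and> x \<in> brick_in (L ! i))"

definition fmap :: "(nat \<times> ('s \<Rightarrow> bool list)) list \<Rightarrow> 's cube_pt \<Rightarrow> 's cube_pt" where
  "fmap L x = (fidx L x, Phi_inv (snd (L ! fidx L x)) (snd x))"

definition gmap :: "(nat \<times> ('s \<Rightarrow> bool list)) list \<Rightarrow> 's cube_pt \<Rightarrow> 's cube_pt" where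
  "gmap L y = (fst (L ! fst y), Phi (snd (L ! fst y)) (snd y))"

lemma Phi_Phi_inv: "\<kappa> \<in> brick \<psi> \<Longrightarrow> Phi \<psi> (Phi_inv \<psi> \<kappa>) = \<kappa>"
  unfolding Phi_def Phi_inv_def brick_def by (auto simp: prefix_concat_shift)

lemma Phi_inv_Phi [simp]: "Phi_inv \<psi> (Phi \<psi> \<kappa>) = \<kappa>"
  unfolding Phi_def Phi_inv_def by simp

lemma Phi_Nil [simp]: "Phi (\<lambda>_. []) \<kappa> = \<kappa>"
  unfolding Phi_def by simp

lemma Phi_inv_Nil [simp]: "Phi_inv (\<lambda>_. []) \<kappa> = \<kappa>"
  unfolding Phi_inv_def by simp

locale fctx =
  fixes m :: nat and L :: "(nat \<times> ('s \<Rightarrow> bool list)) list"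
  assumes part: "brick_set_partition m (brick_in ` set L)"
    and valL: "\<forall>b\<in>set L. valid_brick m b" and distL: "distinct L"
begin

lemma disj: "i < length L \<Longrightarrow> j < length L \<Longrightarrow> x \<in> brick_in (L ! i) \<Longrightarrow> x \<in> brick_in (L ! j) \<Longrightarrow> i = j"
proof (rule ccontr)
  assume a: "i < length L" "j < length L" "x \<in> brick_in (L ! i)" "x \<in> brick_in (L ! j)" "i \<noteq> j"
  then have "L ! i \<noteq> L ! j" using distL by (simp add: nth_eq_iff_index_eq)
  then have "brick_in (L ! i) \<noteq> brick_in (L ! j)" using brick_in_inj by blast
  moreover have "brick_in (L ! i) \<in> brick_in ` set L" "brick_in (L ! j) \<in> brick_in ` set L" using a by auto
  ultimately have "brick_in (L ! i) \<inter> brick_in (L ! j) = {}" using part unfolding brick_set_partition_def by blast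
  then show False using a by blast
qed

lemma cover: "x \<in> cubes m \<Longrightarrow> \<exists>i<length L. x \<in> brick_in (L ! i)"
proof -
  assume "x \<in> cubes m"
  then have "x \<in> \<Union> (brick_in ` set L)" using part unfolding brick_set_partition_def by simp
  then obtain b where b: "b \<in> set L" "x \<in> brick_in b" by blast
  then obtain i where "i < length L" "b = L ! i" by (auto simp: in_set_conv_nth)
  then show ?thesis using b by blast
qed

lemma fidx_eq: "i < length L \<Longrightarrow> x \<in> brick_in (L ! i) \<Longrightarrow> fidx L x = i"
  unfolding fidx_def by (rule some_equality) (auto dest: disj)

lemma fmap_eq: "i < length L \<Longrightarrow> x \<in> brick_in (L ! i) \<Longrightarrow> fmap L x = (i, Phi_inv (snd (L ! i)) (snd x))"
  unfolding fmap_def using fidx_eq by simp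

lemma fmap_canon: "i < length L \<Longrightarrow> x \<in> brick_in (L ! i) \<Longrightarrow> fmap L x = canon_map (L ! i) (i, \<lambda>s. []) x"
  using fmap_eq by (simp add: canon_map_def)

lemma brick_sub: "i < length L \<Longrightarrow> brick_in (L ! i) \<subseteq> cubes m"
proof -
  assume "i < length L"
  then have "L ! i \<in> set L" by simp
  then show ?thesis using valL brick_in_subset_cubes by blast
qed

lemma gf: "x \<in> cubes m \<Longrightarrow> gmap L (fmap L x) = x"
proof -
  assume "x \<in> cubes m"
  then obtain i where i: "i < length L" "x \<in> brick_in (L ! i)" using cover by blast
  then show ?thesis using fmap_eq[OF i] Phi_Phi_inv[of "snd x" "snd (L ! i)"]
    by (auto simp: gmap_def brick_in_def prod_eq_iff)
qed

lemma fg: "y \<in> cubes (length L) \<Longrightarrow> fmap L (gmap L y) = y"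
proof -
  assume "y \<in> cubes (length L)"
  then have i: "fst y < length L" by (auto simp: cubes_def)
  have "gmap L y \<in> brick_in (L ! fst y)" unfolding gmap_def by (rule brick_point)
  then show ?thesis using fmap_eq[OF i] by (simp add: gmap_def)
qed

lemma fmap_in: "x \<in> cubes m \<Longrightarrow> fmap L x \<in> cubes (length L)"
proof -
  assume "x \<in> cubes m"
  then obtain i where i: "i < length L" "x \<in> brick_in (L ! i)" using cover by blast
  then show ?thesis using fmap_eq[OF i] by (simp add: cubes_def)
qed

lemma gmap_in: "y \<in> cubes (length L) \<Longrightarrow> gmap L y \<in> cubes m"
proof -
  assume "y \<in> cubes (length L)"
  then have i: "fst y < length L" by (auto simp: cubes_def)
  have "gmap L y \<in> brick_in (L ! fst y)" unfolding gmap_def by (rule brick_point)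
  then show ?thesis using brick_sub[OF i] by blast
qed

lemma cont_fmap: "continuous_on (cubes m) (fmap L)"
proof -
  have "cubes m = \<Union> (brick_in ` set L)" using part unfolding brick_set_partition_def by simp
  also have "set L = (\<lambda>i. L ! i) ` {..<length L}" by (metis atLeast0LessThan list.set_map map_nth set_upt)
  then have "\<Union> (brick_in ` set L) = \<Union> ((\<lambda>i. brick_in (L ! i)) ` {..<length L})" by (simp add: image_image)
  finally have eq: "cubes m = \<Union> ((\<lambda>i. brick_in (L ! i)) ` {..<length L})" .
  show ?thesis unfolding eq
  proof (rule continuous_on_open_Union)
    fix S assume "S \<in> (\<lambda>i. brick_in (L ! i)) ` {..<length L}"
    then obtain i where i: "i < length L" "S = brick_in (L ! i)" by auto
    have "L ! i \<in> set L" using i by simp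
    then show "open S" using i valL open_brick_in by blast
    have "continuous_on S (\<lambda>x. (i, Phi_inv (snd (L ! i)) (snd x)))"
      by (intro continuous_on_Pair continuous_on_const continuous_on_compose2[OF cont_Phi_inv continuous_on_snd[OF continuous_on_id]]) auto
    then show "continuous_on S (fmap L)"
      by (rule continuous_on_cong[THEN iffD1, rotated 2]) (use i fmap_eq in auto)
  qed
qed

lemma cont_gmap: "continuous_on (cubes (length L)) (gmap L)"
proof -
  have eq: "cubes (length L) = \<Union> ((\<lambda>i. {i} \<times> (UNIV :: ('s \<Rightarrow> cantor) set)) ` {..<length L})"
    by (auto simp: cubes_def)
  show ?thesis unfolding eq
  proof (rule continuous_on_open_Union)
    fix S assume "S \<in> (\<lambda>i. {i} \<times> (UNIV :: ('s \<Rightarrow> cantor) set)) ` {..<length L}"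
    then obtain i where i: "i < length L" "S = {i} \<times> UNIV" by auto
    show "open S" using i by (auto intro!: open_Times simp: open_discrete)
    have "continuous_on S (\<lambda>y. (fst (L ! i), Phi (snd (L ! i)) (snd y)))"
      by (intro continuous_on_Pair continuous_on_const continuous_on_compose2[OF cont_Phi continuous_on_snd[OF continuous_on_id]]) auto
    then show "continuous_on S (gmap L)"
      by (rule continuous_on_cong[THEN iffD1, rotated 2]) (use i in \<open>auto simp: gmap_def\<close>)
  qed
qed

lemma homeo: "homeomorphic_map (top_of_set (cubes m)) (top_of_set (cubes (length L))) (fmap L)"
  unfolding homeomorphic_map_maps homeomorphic_maps_def
  by (intro exI[of _ "gmap L"] conjI)
     (auto simp: cont_fmap cont_gmap fmap_in gmap_in gf fg)

lemma forest:
  assumes "dyadic_partition m (brick_in ` set L)" "m \<ge> 1" "length L \<ge> 1"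
  shows "multicolored_forest m (length L) (fmap L)"
  unfolding multicolored_forest_def
  using assms homeo inj_onI[of "set L" brick_in, OF brick_in_inj] valL distL fmap_canon brick_in_inj
  by (intro conjI exI[of _ L]) (auto intro: inj_onI)

end



lemma tau_id [simp]: "tau id \<kappa> = \<kappa>"
  by (simp add: tau_def)

lemma take_len_le: "take k xs = ys \<Longrightarrow> length ys = k \<Longrightarrow> k \<le> length xs"
  by auto

definition timg :: "nat \<times> ('s \<Rightarrow> bool list) \<Rightarrow> nat \<times> ('s \<Rightarrow> bool list) \<Rightarrow> ('s \<Rightarrow> 's) \<Rightarrow> ('s \<Rightarrow> bool list) \<Rightarrow> ('s \<Rightarrow> bool list)" where
  "timg b b' \<gamma> \<sigma> = (\<lambda>s. snd b' s @ drop (length (snd b (inv \<gamma> s))) (\<sigma> (inv \<gamma> s)))"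

lemma twist_formula:
  assumes t: "\<forall>u. take (length (snd b u)) (\<sigma> u) = snd b u" and k: "\<kappa> \<in> brick \<sigma>"
  shows "twist_map b b' \<gamma> (j, \<kappa>) = (fst b', Phi (timg b b' \<gamma> \<sigma>) (tau \<gamma> (Phi_inv \<sigma> \<kappa>)))"
proof -
  have "Phi (snd b') (tau \<gamma> (Phi_inv (snd b) \<kappa>)) s = Phi (timg b b' \<gamma> \<sigma>) (tau \<gamma> (Phi_inv \<sigma> \<kappa>)) s" for s
  proof -
    define u where "u = inv \<gamma> s"
    have "length (take (length (snd b u)) (\<sigma> u)) = length (snd b u)" using t by simp
    then have le: "length (snd b u) \<le> length (\<sigma> u)" by (simp add: min_def split: if_splits)
    define y where "y = (\<lambda>i. \<kappa> u (i + length (snd b u)))"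
    have pu: "is_prefix (\<sigma> u) (\<kappa> u)" using k by (simp add: brick_def)
    have py: "is_prefix (drop (length (snd b u)) (\<sigma> u)) y" unfolding y_def by (rule is_prefix_drop[OF pu])
    have "concat_seq (drop (length (snd b u)) (\<sigma> u)) (\<lambda>i. y (i + length (drop (length (snd b u)) (\<sigma> u)))) = y"
      by (rule prefix_concat_shift[OF py])
    moreover have "(\<lambda>i. y (i + length (drop (length (snd b u)) (\<sigma> u)))) = (\<lambda>i. \<kappa> u (i + length (\<sigma> u)))"
      unfolding y_def using le by simp
    ultimately have e: "concat_seq (drop (length (snd b u)) (\<sigma> u)) (\<lambda>i. \<kappa> u (i + length (\<sigma> u))) = y" by simp
    show ?thesis
      unfolding Phi_def tau_def Phi_inv_def timg_def u_def[symmetric]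
      by (simp add: concat_append e y_def)
  qed
  then have "Phi (snd b') (tau \<gamma> (Phi_inv (snd b) \<kappa>)) = Phi (timg b b' \<gamma> \<sigma>) (tau \<gamma> (Phi_inv \<sigma> \<kappa>))"
    by (rule ext)
  then show ?thesis unfolding twist_map_def by simp
qed

lemma twist_image:
  assumes bij: "bij \<gamma>" and t: "\<forall>u. take (length (snd b u)) (\<sigma> u) = snd b u"
  shows "twist_map b b' \<gamma> ` ({fst b} \<times> brick \<sigma>) = {fst b'} \<times> brick (timg b b' \<gamma> \<sigma>)"
proof
  show "twist_map b b' \<gamma> ` ({fst b} \<times> brick \<sigma>) \<subseteq> {fst b'} \<times> brick (timg b b' \<gamma> \<sigma>)"
  proof
    fix z assume "z \<in> twist_map b b' \<gamma> ` ({fst b} \<times> brick \<sigma>)"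
    then obtain \<kappa> where k: "\<kappa> \<in> brick \<sigma>" and z: "z = twist_map b b' \<gamma> (fst b, \<kappa>)" by blast
    show "z \<in> {fst b'} \<times> brick (timg b b' \<gamma> \<sigma>)"
      unfolding z twist_formula[OF t k] by (simp add: Phi_in_brick)
  qed
next
  show "{fst b'} \<times> brick (timg b b' \<gamma> \<sigma>) \<subseteq> twist_map b b' \<gamma> ` ({fst b} \<times> brick \<sigma>)"
  proof
    fix y assume y: "y \<in> {fst b'} \<times> brick (timg b b' \<gamma> \<sigma>)"
    define \<eta> where "\<eta> = snd y"
    define \<kappa> where "\<kappa> = Phi \<sigma> (\<lambda>u. Phi_inv (timg b b' \<gamma> \<sigma>) \<eta> (\<gamma> u))"
    have k: "\<kappa> \<in> brick \<sigma>" unfolding \<kappa>_def by (rule Phi_in_brick)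
    have "tau \<gamma> (Phi_inv \<sigma> \<kappa>) = Phi_inv (timg b b' \<gamma> \<sigma>) \<eta>"
      unfolding \<kappa>_def using bij by (simp add: tau_def fun_eq_iff surj_f_inv_f bij_is_surj)
    moreover have "Phi (timg b b' \<gamma> \<sigma>) (Phi_inv (timg b b' \<gamma> \<sigma>) \<eta>) = \<eta>"
      using y by (intro Phi_Phi_inv) (auto simp: \<eta>_def)
    ultimately have "twist_map b b' \<gamma> (fst b, \<kappa>) = y"
      using twist_formula[OF t k] y by (auto simp: \<eta>_def prod_eq_iff)
    then show "y \<in> twist_map b b' \<gamma> ` ({fst b} \<times> brick \<sigma>)" using k by force
  qed
qed



lemma forest_data:
  assumes "multicolored_forest m k f"
  shows "\<exists>L. length L = k \<and> fctx m L \<and> (\<forall>i<k. \<forall>x\<in>brick_in (L!i). f x = (i, Phi_inv (snd (L!i)) (snd x)))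
     \<and> inj_on f (cubes m)"
proof -
  obtain L where L: "length L = k" "\<forall>b\<in>set L. valid_brick m b" "distinct L"
    "dyadic_partition m (brick_in ` set L)"
    "\<forall>i<k. \<forall>x\<in>brick_in (L ! i). f x = canon_map (L ! i) (i, \<lambda>s. []) x"
    and hom: "homeomorphic_map (top_of_set (cubes m)) (top_of_set (cubes k)) f"
    using assms unfolding multicolored_forest_def by blast
  have "fctx m L" using L dyadic_partition_imp by unfold_locales auto
  moreover have "\<forall>i<k. \<forall>x\<in>brick_in (L!i). f x = (i, Phi_inv (snd (L!i)) (snd x))"
    using L(5) by (simp add: canon_map_def)
  moreover have "inj_on f (cubes m)" using homeomorphic_imp_injective_map[OF hom] by simp
  ultimately show ?thesis using L(1) by blast
qed

lemma forest_inv: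
  assumes fc: "fctx m L" and len: "length L = k"
    and fe: "\<forall>i<k. \<forall>x\<in>brick_in (L!i). f x = (i, Phi_inv (snd (L!i)) (snd x))"
    and inj: "inj_on f (cubes m)" and i: "i < k"
  shows "inv_into (cubes m) f (i, w) = (fst (L!i), Phi (snd (L!i)) w)"
proof -
  interpret fctx m L by (rule fc)
  have z: "(fst (L!i), Phi (snd (L!i)) w) \<in> brick_in (L!i)" by (rule brick_point)
  then have zc: "(fst (L!i), Phi (snd (L!i)) w) \<in> cubes m" using brick_sub i len by blast
  have "f (fst (L!i), Phi (snd (L!i)) w) = (i, w)" using fe i z by simp
  then show ?thesis using inv_into_f_f[OF inj zc] by simp
qed

lemma hform:
  assumes mf1: "multicolored_forest m k f1" and mf2: "multicolored_forest n k f2"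
    and tw: "length \<gamma>s = k" "\<forall>x\<in>cubes k. t x = (fst x, tau (\<gamma>s ! fst x) (snd x))"
    and eq: "\<forall>x\<in>cubes m. h x = inv_into (cubes n) f2 (t (f1 x))"
  shows "\<exists>L1 L2. length L1 = k \<and> length L2 = k \<and> fctx m L1 \<and> fctx n L2 \<and>
    (\<forall>i<k. \<forall>x\<in>brick_in (L1!i). h x = (fst (L2!i), Phi (snd (L2!i)) (tau (\<gamma>s!i) (Phi_inv (snd (L1!i)) (snd x)))))"
proof -
  obtain L1 where L1: "length L1 = k" "fctx m L1" "\<forall>i<k. \<forall>x\<in>brick_in (L1!i). f1 x = (i, Phi_inv (snd (L1!i)) (snd x))"
    using forest_data[OF mf1] by blast
  obtain L2 where L2: "length L2 = k" "fctx n L2" "\<forall>i<k. \<forall>x\<in>brick_in (L2!i). f2 x = (i, Phi_inv (snd (L2!i)) (snd x))"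
    "inj_on f2 (cubes n)"
    using forest_data[OF mf2] by blast
  have "h x = (fst (L2!i), Phi (snd (L2!i)) (tau (\<gamma>s!i) (Phi_inv (snd (L1!i)) (snd x))))"
    if i: "i < k" and x: "x \<in> brick_in (L1!i)" for i x
  proof -
    have xc: "x \<in> cubes m" using fctx.brick_sub[OF L1(2)] i x L1(1) by blast
    have "f1 x = (i, Phi_inv (snd (L1!i)) (snd x))" using L1(3) i x by blast
    moreover have "(i, Phi_inv (snd (L1!i)) (snd x)) \<in> cubes k" using i by (simp add: cubes_def)
    ultimately have "t (f1 x) = (i, tau (\<gamma>s!i) (Phi_inv (snd (L1!i)) (snd x)))" using tw(2) by simp
    then show ?thesis using eq xc forest_inv[OF L2(2) L2(1) L2(3) L2(4) i] by simp
  qed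
  then show ?thesis using L1 L2 by blast
qed

lemma prefix_upd: "is_prefix w x \<Longrightarrow> length w \<le> p \<Longrightarrow> is_prefix w (x(p := c))"
  by (auto simp: is_prefix_def)

lemma part2:
  assumes SVG: "SV_G G m n h" and mf1: "multicolored_forest m k f1" and mf2: "multicolored_forest n k f2"
    and tw: "G_twist G k t" and eq: "\<forall>x\<in>cubes m. h x = inv_into (cubes n) f2 (t (f1 x))"
  shows "SV m n h \<longleftrightarrow> (\<forall>x\<in>cubes k. t x = x)"
proof -
  obtain \<gamma>s where gs: "length \<gamma>s = k" "set \<gamma>s \<subseteq> G" "\<forall>x\<in>cubes k. t x = (fst x, tau (\<gamma>s ! fst x) (snd x))"
    using tw unfolding G_twist_def by blast
  obtain L1 L2 where L: "length L1 = k" "length L2 = k" "fctx m L1" "fctx n L2"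
    and H: "\<forall>i<k. \<forall>x\<in>brick_in (L1!i). h x = (fst (L2!i), Phi (snd (L2!i)) (tau (\<gamma>s!i) (Phi_inv (snd (L1!i)) (snd x))))"
    using hform[OF mf1 mf2 gs(1) gs(3) eq] by blast
  have m1: "m \<ge> 1" "n \<ge> 1" and hom: "homeomorphic_map (top_of_set (cubes m)) (top_of_set (cubes n)) h"
    using SVG unfolding SV_G_def by auto
  show ?thesis
  proof
    assume "SV m n h"
    then obtain P Q ids where PQ: "brick_partition m P" "brick_partition n Q" "length Q = length P"
      "length ids = length P" "set ids \<subseteq> {id}"
      "\<forall>i<length P. \<forall>x\<in>brick_in (P ! i). h x = twist_map (P ! i) (Q ! i) (ids ! i) x"
      unfolding SV_def SV_G_def by blast
    show "\<forall>x\<in>cubes k. t x = x"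
    proof
      fix x :: "'a cube_pt" assume xk: "x \<in> cubes k"
      define i where "i = fst x"
      have ik: "i < k" using xk by (auto simp: cubes_def i_def)
      define \<gamma> where "\<gamma> = \<gamma>s ! i"
      have inv_id: "inv \<gamma> s = s" for s
      proof (rule ccontr)
        assume ne: "inv \<gamma> s \<noteq> s"
        define u where "u = inv \<gamma> s"
        define \<psi>1 where "\<psi>1 = snd (L1 ! i)"
        define \<psi>2 where "\<psi>2 = snd (L2 ! i)"
        define x0 where "x0 = (fst (L1!i), Phi \<psi>1 (\<lambda>_ _. False))"
        have x0b: "x0 \<in> brick_in (L1!i)" unfolding x0_def \<psi>1_def by (rule brick_point)
        have x0c: "x0 \<in> cubes m" using fctx.brick_sub[OF L(3)] ik L(1) x0b by blast
        have "x0 \<in> \<Union> (brick_in ` set P)" using PQ(1) x0c unfolding brick_partition_def by simp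
        then obtain j where j: "j < length P" "x0 \<in> brick_in (P ! j)" by (auto simp: in_set_conv_nth)
        define \<kappa>0 where "\<kappa>0 = snd x0"
        define p where "p = length (\<psi>1 u) + length (snd (P!j) u)"
        define \<kappa>1 where "\<kappa>1 = \<kappa>0(u := (\<kappa>0 u)(p := \<not> \<kappa>0 u p))"
        define x1 where "x1 = (fst x0, \<kappa>1)"
        have k0: "\<kappa>0 \<in> brick \<psi>1" "\<kappa>0 \<in> brick (snd (P!j))" "fst x0 = fst (P!j)"
          using x0b j(2) unfolding \<kappa>0_def \<psi>1_def brick_in_def by auto
        have upd: "\<kappa>1 \<in> brick \<phi>" if "\<kappa>0 \<in> brick \<phi>" "length (\<phi> u) \<le> p" for \<phi>
          using that prefix_upd unfolding \<kappa>1_def brick_def by auto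
        have x1b: "x1 \<in> brick_in (L1!i)" using upd[OF k0(1)] x0b
          unfolding x1_def \<psi>1_def p_def brick_in_def by auto
        have x1P: "x1 \<in> brick_in (P!j)" using upd[OF k0(2)] k0(3)
          unfolding x1_def p_def brick_in_def by auto
        have idj: "ids ! j = id" using PQ(4) PQ(5) j(1) by (metis nth_mem singletonD subsetD)
        have hP: "snd (h y) s = concat_seq (snd (Q!j) s) (\<lambda>i. snd y s (i + length (snd (P!j) s)))"
          if "y \<in> brick_in (P!j)" for y
          using PQ(6) j(1) that idj by (simp add: twist_map_def Phi_def Phi_inv_def)
        have "snd (h x1) s = snd (h x0) s"
          using hP[OF x1P] hP[OF j(2)] ne unfolding x1_def \<kappa>1_def \<kappa>0_def u_def by simp
        moreover have hL: "snd (h y) s = concat_seq (\<psi>2 s) (\<lambda>i'. snd y u (i' + length (\<psi>1 u)))"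
          if "y \<in> brick_in (L1!i)" for y
          using H ik that unfolding \<psi>1_def \<psi>2_def \<gamma>_def u_def by (simp add: Phi_def tau_def Phi_inv_def)
        define q where "q = length (\<psi>2 s) + (p - length (\<psi>1 u))"
        have "snd (h x1) s q = \<kappa>1 u p" using hL[OF x1b] unfolding q_def x1_def
          by (simp add: concat_seq_def p_def add.commute)
        moreover have "snd (h x0) s q = \<kappa>0 u p" using hL[OF x0b] unfolding q_def \<kappa>0_def
          by (simp add: concat_seq_def p_def add.commute)
        moreover have "\<kappa>1 u p = (\<not> \<kappa>0 u p)" unfolding \<kappa>1_def by simp
        ultimately show False by simp
      qed
      have "tau \<gamma> (snd x) = snd x" by (simp add: tau_def inv_id)
      then show "t x = x" using gs(3) xk unfolding \<gamma>_def i_def by (simp add: prod_eq_iff)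
    qed
  next
    assume tid: "\<forall>x\<in>cubes k. t x = x"
    have tauid: "tau (\<gamma>s ! i) w = w" if "i < k" for i w
    proof -
      have "(i, w) \<in> cubes k" using that by (simp add: cubes_def)
      then show ?thesis using tid gs(3) by (metis prod.inject fst_conv snd_conv)
    qed
    have bp: "brick_partition m' L'" if "fctx m' L'" for m' L'
    proof -
      interpret fctx m' L' by (rule that)
      show ?thesis unfolding brick_partition_def
      proof (intro conjI allI impI)
        show "\<forall>b\<in>set L'. valid_brick m' b" by (rule valL)
        fix i j assume "i < length L'" "j < length L'" "i \<noteq> j"
        then show "brick_in (L' ! i) \<inter> brick_in (L' ! j) = {}" using disj by blast
      next
        show "\<Union> (brick_in ` set L') = cubes m'" using part unfolding brick_set_partition_def by simp
      qed
    qed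
    have A: "brick_partition m L1" by (rule bp[OF L(3)])
    have B: "brick_partition n L2" by (rule bp[OF L(4)])
    have C: "length L2 = length L1" "length (replicate k id) = length L1" using L by auto
    have D: "set (replicate k id) \<subseteq> {id}" by auto
    have E: "\<forall>i<length L1. \<forall>x\<in>brick_in (L1 ! i). h x = twist_map (L1 ! i) (L2 ! i) (replicate k id ! i) x"
      using H tauid L(1) by (auto simp: twist_map_def)
    show "SV m n h" unfolding SV_def SV_G_def using m1 hom A B C D E by blast
  qed
qed



lemma (in fctx) inv_fmap: "y \<in> cubes (length L) \<Longrightarrow> inv_into (cubes m) (fmap L) y = gmap L y"
proof -
  assume y: "y \<in> cubes (length L)"
  have inj: "inj_on (fmap L) (cubes m)" by (rule inj_on_inverseI[of _ "gmap L"]) (rule gf)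
  show ?thesis by (rule inv_into_f_eq[OF inj gmap_in[OF y] fg[OF y]])
qed

definition owner :: "(nat \<times> ('s \<Rightarrow> bool list)) list \<Rightarrow> nat \<times> ('s \<Rightarrow> bool list) \<Rightarrow> nat" where
  "owner P c = (SOME a. a < length P \<and> brick_in c \<subseteq> brick_in (P ! a))"

lemma brick_partition_uniq:
  assumes "brick_partition m P" "a < length P" "a' < length P" "x \<in> brick_in (P ! a)" "x \<in> brick_in (P ! a')"
  shows "a = a'"
  using assms unfolding brick_partition_def by blast

lemma brick_partition_cover:
  assumes "brick_partition m P" "x \<in> cubes m"
  obtains a where "a < length P" "x \<in> brick_in (P ! a)"
proof -
  have "x \<in> \<Union> (brick_in ` set P)" using assms unfolding brick_partition_def by simp
  then obtain b where b: "b \<in> set P" "x \<in> brick_in b" by blast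
  then obtain a where "a < length P" "b = P ! a" by (auto simp: in_set_conv_nth)
  then show ?thesis using b that by blast
qed

lemma owner_eq:
  assumes "brick_partition m P" "a < length P" "brick_in c \<subseteq> brick_in (P ! a)"
  shows "owner P c = a"
  unfolding owner_def
proof (rule some_equality)
  show "a < length P \<and> brick_in c \<subseteq> brick_in (P ! a)" using assms by simp
  fix a' assume a': "a' < length P \<and> brick_in c \<subseteq> brick_in (P ! a')"
  obtain x where "x \<in> brick_in c" using brick_in_nonempty by blast
  then show "a' = a" using brick_partition_uniq[OF assms(1) _ assms(2)] a' assms(3) by blast
qed

lemma nat_arith1: "(q::nat) \<le> M \<Longrightarrow> M \<le> p + 2 * M - q"
  by simp

lemma part1:
  assumes pg: "perm_subgroup G" and SVG: "SV_G G m n h"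
  shows "\<exists>k f1 f2 t. multicolored_forest m k f1 \<and> multicolored_forest n k f2 \<and> G_twist G k t \<and>
            (\<forall>x\<in>cubes m. h x = inv_into (cubes n) f2 (t (f1 x)))"
proof -
  obtain P Q gs where hP: "brick_partition m P" and hQ: "brick_partition n Q" and lQ: "length Q = length P"
    and lg: "length gs = length P" and gG: "set gs \<subseteq> G"
    and htw: "\<forall>a<length P. \<forall>x\<in>brick_in (P ! a). h x = twist_map (P ! a) (Q ! a) (gs ! a) x"
    using SVG unfolding SV_G_def by blast
  have m1: "m \<ge> 1" "n \<ge> 1" and hom: "homeomorphic_map (top_of_set (cubes m)) (top_of_set (cubes n)) h"
    using SVG unfolding SV_G_def by auto
  define N where "N = length P"
  have bijg: "bij (gs ! a)" if "a < N" for a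
  proof -
    have "gs ! a \<in> G" using gG lg that N_def nth_mem by (metis subsetD)
    then show ?thesis using pg unfolding perm_subgroup_def by blast
  qed
  have hinj: "inj_on h (cubes m)" using homeomorphic_imp_injective_map[OF hom] by simp
  have hsurj: "h ` cubes m = cubes n" using homeomorphic_imp_surjective_map[OF hom] by simp
  have validP: "valid_brick m (P ! a)" if "a < N" for a
    using hP that unfolding brick_partition_def N_def by simp
  have validQ: "valid_brick n (Q ! a)" if "a < N" for a
    using hQ that lQ unfolding brick_partition_def N_def by simp

  define F where "F = (\<Union>a\<in>{..<N}. {s. snd (P ! a) s \<noteq> []} \<union> {s. snd (Q ! a) s \<noteq> []})"
  have finF: "finite F" unfolding F_def
    using validP validQ by (auto simp: valid_brick_def fin_supp_def)
  have nF: "snd (P ! a) s = [] \<and> snd (Q ! a) s = []" if "a < N" "s \<notin> F" for a s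
    using that unfolding F_def by auto
  define M where "M = Max (insert 0 ((\<lambda>(a, s). length (snd (P ! a) s) + length (snd (Q ! a) s)) ` ({..<N} \<times> F)))"
  have lenPQ: "length (snd (P ! a) s) + length (snd (Q ! a) s) \<le> M" if "a < N" for a s
  proof (cases "s \<in> F")
    case True
    then show ?thesis unfolding M_def using that finF
      by (intro Max_ge) (auto intro!: imageI)
  next
    case False then show ?thesis using nF that by simp
  qed
  have lenP: "length (snd (P ! a) s) \<le> M" and lenQ: "length (snd (Q ! a) s) \<le> M" if "a < N" for a s
    using lenPQ[OF that, of s] by auto
  define l1 where "l1 = (\<lambda>s. if s \<in> F then M else 0)"
  define F2 where "F2 = F \<union> (\<Union>a\<in>{..<N}. (gs ! a) ` F)"
  have finF2: "finite F2" unfolding F2_def using finF by auto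
  define l2 where "l2 = (\<lambda>s. if s \<in> F2 then 2 * M else 0)"
  have lenQl2: "length (snd (Q ! a) s) \<le> l2 s" if "a < N" for a s
  proof (cases "s \<in> F")
    case True then show ?thesis using lenQ[OF that, of s] unfolding l2_def F2_def by auto
  next
    case False then show ?thesis using nF[OF that False] by simp
  qed

  define Tm where "Tm = (\<lambda>j. (j, \<lambda>_::'a. ([]::bool list))) ` {..<m}"
  have brTm: "brick_in ` Tm = (\<lambda>j. {j} \<times> UNIV) ` {0..<m}"
    unfolding Tm_def by (auto simp: base_brick image_image)
  have dyTm: "dyadic_partition m (brick_in ` Tm)" unfolding brTm by (rule dyadic_partition.base)
  have valTm: "\<forall>b\<in>Tm. valid_brick m b" unfolding Tm_def by (auto simp: valid_brick_def fin_supp_def)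
  have finTm: "finite Tm" unfolding Tm_def by simp
  interpret R: subctx m Tm F "\<lambda>_. l1"
    using finTm valTm finF by unfold_locales (auto simp: Tm_def l1_def)
  define R1 where "R1 = Sub Tm (\<lambda>_. l1)"
  have dyR1: "dyadic_partition m (brick_in ` R1)" unfolding R1_def
    by (rule Sub_dyadic[OF finTm dyTm valTm finF]) (auto simp: Tm_def l1_def)
  have lenR1: "length (snd r s) = l1 s" if "r \<in> R1" for r s
    using that unfolding R1_def by (auto elim!: Sub_memE)
  have valR1: "valid_brick m r" if "r \<in> R1" for r using that R.Sub_valid unfolding R1_def by blast
  have finR1: "finite R1" unfolding R1_def by (rule R.Sub_finite)

  have R1own: "\<exists>a<N. brick_in r \<subseteq> brick_in (P ! a) \<and> (\<forall>u. take (length (snd (P ! a) u)) (snd r u) = snd (P ! a) u)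
        \<and> fst r = fst (P ! a)" if r: "r \<in> R1" for r
  proof -
    define x0 where "x0 = (fst r, Phi (snd r) (\<lambda>_ _. False))"
    have x0r: "x0 \<in> brick_in r" unfolding x0_def by (rule brick_point)
    then have "x0 \<in> cubes m" using brick_in_subset_cubes[OF valR1[OF r]] by blast
    then obtain a where a: "a < N" "x0 \<in> brick_in (P ! a)" using brick_partition_cover[OF hP] N_def by metis
    have fr: "fst r = fst (P ! a)" using a(2) unfolding x0_def brick_in_def by simp
    have tk: "take (length (snd (P ! a) u)) (snd r u) = snd (P ! a) u" for u
    proof -
      have p1: "is_prefix (snd (P ! a) u) (snd x0 u)" using a(2) unfolding brick_in_def brick_def by auto
      have p2: "is_prefix (snd r u) (snd x0 u)" using x0r unfolding brick_in_def brick_def by auto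
      have "length (snd (P ! a) u) \<le> length (snd r u)"
        using lenR1[OF r, of u] lenP[OF a(1), of u] nF[OF a(1), of u] unfolding l1_def by (auto split: if_splits)
      then show ?thesis using is_prefix_longer[OF p1 p2] by simp
    qed
    have "brick_in r \<subseteq> brick_in (P ! a)"
      using brick_sub_mono[of "snd (P ! a)" "snd r"] tk fr unfolding brick_in_def by auto
    then show ?thesis using a(1) tk fr by blast
  qed

  define Lam where "Lam = (\<lambda>r u. length (snd (P ! owner P r) u) + l2 ((gs ! owner P r) u)
       - length (snd (Q ! owner P r) ((gs ! owner P r) u)))"
  define K2 where "K2 = F \<union> (\<Union>a\<in>{..<N}. inv (gs ! a) ` F2)"
  have finK2: "finite K2" unfolding K2_def using finF finF2 by auto
  have Lge: "\<forall>r\<in>R1. \<forall>s. length (snd r s) \<le> Lam r s"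
  proof (intro ballI allI)
    fix r s assume r: "r \<in> R1"
    obtain a where a: "a < N" "brick_in r \<subseteq> brick_in (P ! a)" using R1own[OF r] by blast
    have o: "owner P r = a" using owner_eq[OF hP _ a(2)] a(1) N_def by simp
    show "length (snd r s) \<le> Lam r s"
    proof (cases "s \<in> F")
      case True
      then have "(gs ! a) s \<in> F2" using a(1) unfolding F2_def by auto
      then have "l2 ((gs ! a) s) = 2 * M" unfolding l2_def by simp
      then show ?thesis using lenR1[OF r, of s] True lenQ[OF a(1), of "(gs ! a) s"]
        unfolding Lam_def o l1_def by simp
    next
      case False then show ?thesis using lenR1[OF r, of s] unfolding l1_def by simp
    qed
  qed
  have LK: "\<forall>r\<in>R1. \<forall>s. s \<notin> K2 \<longrightarrow> Lam r s = length (snd r s)"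
  proof (intro ballI allI impI)
    fix r s assume r: "r \<in> R1" and s: "s \<notin> K2"
    obtain a where a: "a < N" "brick_in r \<subseteq> brick_in (P ! a)" using R1own[OF r] by blast
    have o: "owner P r = a" using owner_eq[OF hP _ a(2)] a(1) N_def by simp
    have sF: "s \<notin> F" using s unfolding K2_def by simp
    have "(gs ! a) s \<notin> F2"
    proof
      assume "(gs ! a) s \<in> F2"
      then have "inv (gs ! a) ((gs ! a) s) \<in> K2" unfolding K2_def using a(1) by blast
      then show False using s bij_is_inj[OF bijg[OF a(1)]] by simp
    qed
    then show "Lam r s = length (snd r s)"
      using nF[OF a(1) sF] lenR1[OF r, of s] sF unfolding Lam_def o l1_def l2_def by simp
  qed
  interpret VV: subctx m R1 K2 Lam
    using finR1 valR1 finK2 Lge LK by unfold_locales auto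
  define V where "V = Sub R1 Lam"
  have dyV: "dyadic_partition m (brick_in ` V)" unfolding V_def
    using Sub_dyadic[OF finR1 dyR1 _ finK2] valR1 Lge LK by blast
  have partV: "brick_set_partition m (brick_in ` V)" by (rule dyadic_partition_imp[OF dyV])
  have valV: "valid_brick m c" if "c \<in> V" for c using that VV.Sub_valid unfolding V_def by blast
  have finV: "finite V" unfolding V_def by (rule VV.Sub_finite)

  have Vprops: "owner P c < N \<and> fst c = fst (P ! owner P c) \<and> brick_in c \<subseteq> brick_in (P ! owner P c)
      \<and> (\<forall>u. take (length (snd (P ! owner P c) u)) (snd c u) = snd (P ! owner P c) u)
      \<and> (\<forall>u. length (snd c u) = length (snd (P ! owner P c) u) + l2 ((gs ! owner P c) u)
           - length (snd (Q ! owner P c) ((gs ! owner P c) u)))" if c: "c \<in> V" for c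
  proof -
    obtain r \<sigma> where r: "r \<in> R1" "c = (fst r, \<sigma>)" "\<And>s. length (\<sigma> s) = Lam r s"
      "\<And>s. take (length (snd r s)) (\<sigma> s) = snd r s"
      using c unfolding V_def by (auto elim: Sub_memE)
    obtain a where a: "a < N" "brick_in r \<subseteq> brick_in (P ! a)"
      "\<forall>u. take (length (snd (P ! a) u)) (snd r u) = snd (P ! a) u" "fst r = fst (P ! a)"
      using R1own[OF r(1)] by blast
    have o: "owner P r = a" using owner_eq[OF hP _ a(2)] a(1) N_def by simp
    have "c \<in> sub r (Lam r)" using r by (auto intro: sub_memI)
    then have "brick_in c \<subseteq> brick_in r" by (rule sub_subset)
    with a(2) have cs: "brick_in c \<subseteq> brick_in (P ! a)" by blast
    have oc: "owner P c = a" using owner_eq[OF hP _ cs] a(1) N_def by simp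
    have tk: "take (length (snd (P ! a) u)) (snd c u) = snd (P ! a) u" for u
    proof -
      have "length (take (length (snd (P ! a) u)) (snd r u)) = length (snd (P ! a) u)" using a(3) by simp
      then have le: "length (snd (P ! a) u) \<le> length (snd r u)" by (simp add: min_def split: if_splits)
      have "take (length (snd (P ! a) u)) (\<sigma> u) = take (length (snd (P ! a) u)) (take (length (snd r u)) (\<sigma> u))"
        using le by (simp add: min_absorb1)
      also have "\<dots> = snd (P ! a) u" using r(4) a(3) by simp
      finally show ?thesis using r(2) by simp
    qed
    show ?thesis using oc a(1) a(4) r(2) cs tk r(3) unfolding Lam_def o by simp
  qed

  define Tn where "Tn = (\<lambda>j. (j, \<lambda>_::'a. ([]::bool list))) ` {..<n}"
  have brTn: "brick_in ` Tn = (\<lambda>j. {j} \<times> UNIV) ` {0..<n}"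
    unfolding Tn_def by (auto simp: base_brick image_image)
  have dyTn: "dyadic_partition n (brick_in ` Tn)" unfolding brTn by (rule dyadic_partition.base)
  have valTn: "\<forall>b\<in>Tn. valid_brick n b" unfolding Tn_def by (auto simp: valid_brick_def fin_supp_def)
  have finTn: "finite Tn" unfolding Tn_def by simp
  interpret UU: subctx n Tn F2 "\<lambda>_. l2"
    using finTn valTn finF2 by unfold_locales (auto simp: Tn_def l2_def)
  define U where "U = Sub Tn (\<lambda>_. l2)"
  have dyU: "dyadic_partition n (brick_in ` U)" unfolding U_def
    by (rule Sub_dyadic[OF finTn dyTn valTn finF2]) (auto simp: Tn_def l2_def)
  have partU: "brick_set_partition n (brick_in ` U)" by (rule dyadic_partition_imp[OF dyU])
  have valU: "valid_brick n c" if "c \<in> U" for c using that UU.Sub_valid unfolding U_def by blast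

  define img where "img = (\<lambda>c. (fst (Q ! owner P c), timg (P ! owner P c) (Q ! owner P c) (gs ! owner P c) (snd c)))"
  have imgU: "img c \<in> U" if c: "c \<in> V" for c
  proof -
    define a where "a = owner P c"
    have va: "a < N" and lc: "\<forall>u. length (snd c u) = length (snd (P ! a) u) + l2 ((gs ! a) u)
           - length (snd (Q ! a) ((gs ! a) u))" using Vprops[OF c] unfolding a_def by auto
    have b: "(fst (Q ! a), \<lambda>_. []) \<in> Tn" using validQ[OF va] unfolding Tn_def valid_brick_def by auto
    have "(fst (Q ! a), timg (P ! a) (Q ! a) (gs ! a) (snd c)) \<in> sub (fst (Q ! a), \<lambda>_. []) l2"
    proof -
      have "length (timg (P ! a) (Q ! a) (gs ! a) (snd c) s) = l2 s" for s
      proof -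
        have gi: "(gs ! a) (inv (gs ! a) s) = s" using bijg[OF va] by (simp add: surj_f_inv_f bij_is_surj)
        show ?thesis unfolding timg_def using lc[rule_format, of "inv (gs ! a) s"] gi lenQl2[OF va, of s]
          by simp
      qed
      then show ?thesis using sub_memI[of "timg (P ! a) (Q ! a) (gs ! a) (snd c)" l2 "(fst (Q ! a), \<lambda>_. [])"]
        by simp
    qed
    then show ?thesis using b unfolding U_def Sub_def img_def a_def by auto
  qed
  have bc: "brick_in c = {fst (P ! owner P c)} \<times> brick (snd c)" if "c \<in> V" for c
    using Vprops[OF that] unfolding brick_in_def by simp
  have himg: "h ` brick_in c = brick_in (img c)" if c: "c \<in> V" for c
  proof -
    define a where "a = owner P c"
    have va: "a < N" and cs: "brick_in c \<subseteq> brick_in (P ! a)"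
      and tk: "\<forall>u. take (length (snd (P ! a) u)) (snd c u) = snd (P ! a) u"
      using Vprops[OF c] unfolding a_def by auto
    have "h ` brick_in c = twist_map (P ! a) (Q ! a) (gs ! a) ` brick_in c"
      using htw va cs N_def by (intro image_cong) auto
    also have "\<dots> = brick_in (img c)"
      using twist_image[OF bijg[OF va] tk] bc[OF c] unfolding img_def a_def[symmetric] brick_in_def by simp
    finally show ?thesis .
  qed
  have hform1: "h x = (fst (img c), Phi (snd (img c)) (tau (gs ! owner P c) (Phi_inv (snd c) (snd x))))"
    if c: "c \<in> V" and x: "x \<in> brick_in c" for c x
  proof -
    define a where "a = owner P c"
    have va: "a < N" and cs: "brick_in c \<subseteq> brick_in (P ! a)"
      and tk: "\<forall>u. take (length (snd (P ! a) u)) (snd c u) = snd (P ! a) u"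
      using Vprops[OF c] unfolding a_def by auto
    have k: "snd x \<in> brick (snd c)" using x unfolding brick_in_def by auto
    have "h x = twist_map (P ! a) (Q ! a) (gs ! a) x" using htw va cs x N_def by auto
    also have "\<dots> = twist_map (P ! a) (Q ! a) (gs ! a) (fst x, snd x)" by simp
    also have "\<dots> = (fst (Q ! a), Phi (timg (P ! a) (Q ! a) (gs ! a) (snd c)) (tau (gs ! a) (Phi_inv (snd c) (snd x))))"
      by (rule twist_formula[OF tk k])
    finally show ?thesis unfolding img_def a_def by simp
  qed

  obtain L1 where L1: "set L1 = V" "distinct L1" using finite_distinct_list[OF finV] by blast
  define k where "k = length L1"
  define L2 where "L2 = map img L1"
  have setL2: "set L2 = U"
  proof
    show "set L2 \<subseteq> U" unfolding L2_def using imgU L1(1) by auto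
  next
    show "U \<subseteq> set L2"
    proof
      fix u assume u: "u \<in> U"
      define y where "y = (fst u, Phi (snd u) (\<lambda>_ _. False))"
      have yu: "y \<in> brick_in u" unfolding y_def by (rule brick_point)
      then have "y \<in> cubes n" using brick_in_subset_cubes[OF valU[OF u]] by blast
      then obtain x where x: "x \<in> cubes m" "h x = y" using hsurj by force
      have "x \<in> \<Union> (brick_in ` V)" using partV x(1) unfolding brick_set_partition_def by simp
      then obtain c where c: "c \<in> V" "x \<in> brick_in c" by blast
      have "y \<in> brick_in (img c)" using himg[OF c(1)] c(2) x(2) by blast
      moreover have "img c \<in> U" by (rule imgU[OF c(1)])
      ultimately have "brick_in u = brick_in (img c)"
        using partU u yu unfolding brick_set_partition_def by blast
      then have "u = img c" by (rule brick_in_inj)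
      then show "u \<in> set L2" unfolding L2_def using c(1) L1(1) by simp
    qed
  qed
  have injimg: "inj_on img V"
  proof (rule inj_onI)
    fix c c' assume c: "c \<in> V" "c' \<in> V" "img c = img c'"
    then have "h ` brick_in c = h ` brick_in c'" using himg by simp
    moreover have "brick_in c \<subseteq> cubes m" "brick_in c' \<subseteq> cubes m"
      using brick_in_subset_cubes[OF valV[OF c(1)]] brick_in_subset_cubes[OF valV[OF c(2)]] by auto
    ultimately have "brick_in c = brick_in c'" using inj_on_image_eq_iff[OF hinj] by blast
    then show "c = c'" by (rule brick_in_inj)
  qed
  have dL2: "distinct L2" unfolding L2_def using L1 injimg by (simp add: distinct_map)
  have lL2: "length L2 = k" unfolding L2_def k_def by simp
  have k1: "k \<ge> 1"
  proof -
    have "(0, \<lambda>_ _. False) \<in> cubes m" using m1 by (simp add: cubes_def)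
    then have "V \<noteq> {}" using partV unfolding brick_set_partition_def by auto
    then show ?thesis using L1(1) unfolding k_def by (cases L1) auto
  qed
  interpret FL1: fctx m L1 using partV valV L1 by unfold_locales auto
  interpret FL2: fctx n L2 using partU valU dL2 setL2 by unfold_locales auto
  have mf1: "multicolored_forest m k (fmap L1)" unfolding k_def
    by (rule FL1.forest) (use dyV L1 m1 k1 k_def in auto)
  have mf2: "multicolored_forest n k (fmap L2)" unfolding lL2[symmetric]
    by (rule FL2.forest) (use dyU setL2 m1 k1 lL2 in auto)
  define gl where "gl = map (\<lambda>c. gs ! owner P c) L1"
  define t where "t = (\<lambda>x::'a cube_pt. (fst x, tau (gl ! fst x) (snd x)))"
  have tw: "G_twist G k t" unfolding G_twist_def
  proof (intro exI[of _ gl] conjI)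
    show "length gl = k" unfolding gl_def k_def by simp
    show "set gl \<subseteq> G"
    proof
      fix g assume "g \<in> set gl"
      then obtain c where c: "c \<in> V" "g = gs ! owner P c" unfolding gl_def using L1(1) by auto
      have "owner P c < length gs" using Vprops[OF c(1)] lg N_def by simp
      then show "g \<in> G" using c(2) gG nth_mem by blast
    qed
    show "\<forall>x\<in>cubes k. t x = (fst x, tau (gl ! fst x) (snd x))" unfolding t_def by simp
  qed
  have eqn: "\<forall>x\<in>cubes m. h x = inv_into (cubes n) (fmap L2) (t (fmap L1 x))"
  proof
    fix x :: "'a cube_pt" assume x: "x \<in> cubes m"
    obtain i where i: "i < length L1" "x \<in> brick_in (L1 ! i)" using FL1.cover[OF x] by blast
    define c where "c = L1 ! i"
    have cV: "c \<in> V" using i(1) L1(1) unfolding c_def by auto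
    have "fmap L1 x = (i, Phi_inv (snd c) (snd x))" using FL1.fmap_eq[OF i] unfolding c_def .
    then have "t (fmap L1 x) = (i, tau (gs ! owner P c) (Phi_inv (snd c) (snd x)))"
      unfolding t_def gl_def c_def using i(1) by simp
    moreover have "(i, tau (gs ! owner P c) (Phi_inv (snd c) (snd x))) \<in> cubes (length L2)"
      using i(1) lL2 k_def by (simp add: cubes_def)
    ultimately have "inv_into (cubes n) (fmap L2) (t (fmap L1 x))
        = gmap L2 (i, tau (gs ! owner P c) (Phi_inv (snd c) (snd x)))"
      using FL2.inv_fmap by simp
    also have "\<dots> = (fst (img c), Phi (snd (img c)) (tau (gs ! owner P c) (Phi_inv (snd c) (snd x))))"
      unfolding gmap_def L2_def c_def using i(1) by simp
    also have "\<dots> = h x" using hform1[OF cV] i(2) unfolding c_def by simp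
    finally show "h x = inv_into (cubes n) (fmap L2) (t (fmap L1 x))" by simp
  qed
  show ?thesis using mf1 mf2 tw eqn by blast
qed


theorem lemma2p2:
  fixes G :: "('s \<Rightarrow> 's) set" and h :: "'s cube_pt \<Rightarrow> 's cube_pt" and m n :: nat
  assumes "perm_subgroup G"
    and "SV_G G m n h"
  shows "(\<exists>k f1 f2 t. multicolored_forest m k f1 \<and> multicolored_forest n k f2 \<and> G_twist G k t \<and>
            (\<forall>x\<in>cubes m. h x = inv_into (cubes n) f2 (t (f1 x))))
       \<and> (\<forall>k f1 f2 t. multicolored_forest m k f1 \<and> multicolored_forest n k f2 \<and> G_twist G k t \<and>
            (\<forall>x\<in>cubes m. h x = inv_into (cubes n) f2 (t (f1 x)))
            \<longrightarrow> (SV m n h \<longleftrightarrow> (\<forall>x\<in>cubes k. t x = x)))"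
proof (intro conjI allI impI)
  show "\<exists>k f1 f2 t. multicolored_forest m k f1 \<and> multicolored_forest n k f2 \<and> G_twist G k t \<and>
            (\<forall>x\<in>cubes m. h x = inv_into (cubes n) f2 (t (f1 x)))"
    by (rule part1[OF assms])
next
  fix k f1 f2 t
  assume a: "multicolored_forest m k f1 \<and> multicolored_forest n k f2 \<and> G_twist G k t \<and>
            (\<forall>x\<in>cubes m. h x = inv_into (cubes n) f2 (t (f1 x)))"
  then show "SV m n h \<longleftrightarrow> (\<forall>x\<in>cubes k. t x = x)"
    using part2[OF assms(2)] by blast
qed

end
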